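(* In the weighted transaction packaging game described in the context, let $\mathrm{sum}=\sum_{\mathsf{tx}'\in M}s(\mathsf{tx}')$ and $$\hat p^{\mathrm{real}}(\mathsf{tx})=\frac{1}{\mathrm{sum}}\left(k+\sum_{\mathsf{tx}''\in M}s(\mathsf{tx}'')\frac{\ln v(\mathsf{tx})-\ln v(\mathsf{tx}'')}{\lambda}\right)\quad(\mathsf{tx}\in M).$$ For $x\in\mathbb{R}$ define $p^{\mathrm{real}}_x:M\to\mathbb{R}$ by $p^{\mathrm{real}}_x(\mathsf{tx})=0$ if $\hat p^{\mathrm{real}}(\mathsf{tx})\le x$, $p^{\mathrm{real}}_x(\mathsf{tx})=\hat p^{\mathrm{real}}(\mathsf{tx})-x$ if $x<\hat p^{\mathrm{real}}(\mathsf{tx})<x+1$, and $p^{\mathrm{real}}_x(\mathsf{tx})=1$ if $\hat p^{\mathrm{real}}(\mathsf{tx})\ge x+1$. Let $\hat x$ be the smallest real solution of the equation $\sum_{\mathsf{tx}\in M}\min(\max(\hat p^{\mathrm{real}}(\mathsf{tx})-x,0),1)\,s(\mathsf{tx})=k$. Then (1) $p^{\mathrm{real}}_{\hat x}(\mathsf{tx})\in[0,1]$ for all $\mathsf{tx}\in M$, and (2) $\sum_{\mathsf{tx}\in M}p^{\mathrm{real}}_{\hat x}(\mathsf{tx})s(\mathsf{tx})=k$. Furthermore, if there is a mixed strategy $\sigma$ with $p^\sigma(\mathsf{tx})=p^{\mathrm{real}}_{\hat x}(\mathsf{tx})$ for all $\mathsf{tx}\in M$, then $\sigma$ is an equilibrium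 strategy.
   Context: Weighted transaction packaging game. Fix a real $k>0$ (block capacity), a real $\lambda>0$ (network latency parameter), a finite set $M$ (the mempool) of transactions, a gas price function $v:M\to(0,\infty)$, and a size function $s:M\to(0,\infty)$ (block capacity used by each transaction), with $\sum_{\mathsf{tx}\in M}s(\mathsf{tx})\ge k$. Miners are indexed by $i\in[0,1]$. A pure strategy of a miner is a subset $D\subseteq M$ with $\sum_{\mathsf{tx}\in D}s(\mathsf{tx})\le k$; a mixed strategy is a probability distribution $\sigma$ on such subsets, with marginal probability $p^\sigma(\mathsf{tx})=\sum_D\sigma(D)\mathbf{1}[\mathsf{tx}\in D]$. Conditional on miner $i$ mining a block $B_i$ (drawn from her mixed strategy $\sigma_i$), the number $\gamma$ of other blocks mined is distributed as $\mathrm{Poisson}(\lambda)$; they are mined by miners chosen independently and uniformly at random from $[0,1]$, each such miner $j$ producing a block $B_j$ drawn independently from her mixed strategy $\sigma_j$. A transaction $\mathsf{tx}$ in $B_i$ pays gas fee $s(\mathsf{tx})v(\mathsf{tx})$ to miner $i$ only if no other mined block contains it, so the utility of miner $i$ is $u_i(\sigma_i,\sigma_{-i})=\sum_{\mathsf{tx}\in M}p^{\sigma_i}(\mathsf{tx})\,s(\mathsf{tx})\,v(\mathsf{tx})\,\Pr[\text{no other mined block }B_j\ (j\neq i)\text{ contains }\mathsf{tx}]$. A mixed strategy $\sigma^*$ is an equilibrium strategy if for every $i\in[0,1]$ and every mixed strategy $\sigma$, $u_i(\sigma,\sigma^*_{-i})\le u_i(\sigma^*,\sigma^*_{-i})$,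 where $\sigma^*_{-i}$ denotes the profile in which all miners other than $i$ use $\sigma^*$. *)

theory Defs
  imports "HOL-Probability.Probability"
begin

definition mixed_strategy :: "'a set \<Rightarrow> ('a \<Rightarrow> real) \<Rightarrow> real \<Rightarrow> 'a set pmf \<Rightarrow> bool" where
  "mixed_strategy M s k \<sigma> \<longleftrightarrow> (\<forall>D \<in> set_pmf \<sigma>. D \<subseteq> M \<and> (\<Sum>tx\<in>D. s tx) \<le> k)"

definition marginal :: "'a set pmf \<Rightarrow> 'a \<Rightarrow> real" where
  "marginal \<sigma> tx = measure_pmf.prob \<sigma> {D. tx \<in> D}"

fun blocks_pmf :: "'a set pmf \<Rightarrow> nat \<Rightarrow> 'a set list pmf" where
  "blocks_pmf \<sigma> 0 = return_pmf []"
| "blocks_pmf \<sigma> (Suc n) = do { B \<leftarrow> \<sigma>; Bs \<leftarrow> blocks_pmf \<sigma> n; return_pmf (B # Bs) }"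

text \<open>Distribution of the list of other mined blocks when all other miners use sigma:
  a Poisson(lambda) number of blocks, each drawn independently from sigma.\<close>
definition other_blocks :: "real \<Rightarrow> 'a set pmf \<Rightarrow> 'a set list pmf" where
  "other_blocks lam \<sigma> = poisson_pmf lam \<bind> blocks_pmf \<sigma>"

definition no_collision :: "real \<Rightarrow> 'a set pmf \<Rightarrow> 'a \<Rightarrow> real" where
  "no_collision lam \<sigma> tx = measure_pmf.prob (other_blocks lam \<sigma>) {Bs. \<forall>B \<in> set Bs. tx \<notin> B}"

definition utility :: "'a set \<Rightarrow> ('a \<Rightarrow> real) \<Rightarrow> ('a \<Rightarrow> real) \<Rightarrow> real \<Rightarrow> 'a set pmf \<Rightarrow> 'a set pmf \<Rightarrow> real" where
  "utility M v s lam \<sigma> \<tau> = (\<Sum>tx\<in>M. marginal \<sigma> tx * s tx * v tx * no_collision lam \<tau> tx)"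

definition equilibrium :: "'a set \<Rightarrow> ('a \<Rightarrow> real) \<Rightarrow> ('a \<Rightarrow> real) \<Rightarrow> real \<Rightarrow> real \<Rightarrow> 'a set pmf \<Rightarrow> bool" where
  "equilibrium M v s k lam \<sigma>s \<longleftrightarrow> mixed_strategy M s k \<sigma>s \<and>
     (\<forall>\<sigma>. mixed_strategy M s k \<sigma> \<longrightarrow> utility M v s lam \<sigma> \<sigma>s \<le> utility M v s lam \<sigma>s \<sigma>s)"

definition p_hat_real :: "'a set \<Rightarrow> ('a \<Rightarrow> real) \<Rightarrow> ('a \<Rightarrow> real) \<Rightarrow> real \<Rightarrow> real \<Rightarrow> 'a \<Rightarrow> real" where
  "p_hat_real M v s k lam tx =
     (k + (\<Sum>tx''\<in>M. s tx'' * ((ln (v tx) - ln (v tx'')) / lam))) / (\<Sum>tx'\<in>M. s tx')"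

definition p_real :: "'a set \<Rightarrow> ('a \<Rightarrow> real) \<Rightarrow> ('a \<Rightarrow> real) \<Rightarrow> real \<Rightarrow> real \<Rightarrow> real \<Rightarrow> 'a \<Rightarrow> real" where
  "p_real M v s k lam x tx =
     (if p_hat_real M v s k lam tx \<le> x then 0
      else if p_hat_real M v s k lam tx < x + 1 then p_hat_real M v s k lam tx - x
      else 1)"

end

theory Submission imports Defs begin

lemma blocks_avoid:
  "emeasure (measure_pmf (blocks_pmf \<sigma> n)) {Bs. \<forall>B\<in>set Bs. tx \<notin> B} = ennreal ((1 - marginal \<sigma> tx) ^ n)"
proof (induction n)
  case 0
  then show ?case by simp
next
  case (Suc n)
  have c: "emeasure (measure_pmf \<sigma>) {D. tx \<notin> D} = ennreal (1 - marginal \<sigma> tx)"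
  proof -
    have "{D. tx \<notin> D} = UNIV - {D. tx \<in> D}" by auto
    then have "measure_pmf.prob \<sigma> {D. tx \<notin> D} = 1 - marginal \<sigma> tx"
      unfolding marginal_def using measure_pmf.prob_compl[of "{D. tx \<in> D}" \<sigma>] by simp
    then show ?thesis by (simp add: measure_pmf.emeasure_eq_measure)
  qed
  have "emeasure (measure_pmf (blocks_pmf \<sigma> (Suc n))) {Bs. \<forall>B\<in>set Bs. tx \<notin> B}
     = (\<integral>\<^sup>+B. (\<integral>\<^sup>+Bs. indicator {D. tx \<notin> D} B * indicator {Bs. \<forall>B\<in>set Bs. tx \<notin> B} Bs \<partial>measure_pmf (blocks_pmf \<sigma> n)) \<partial>measure_pmf \<sigma>)"
    by (simp add: indicator_def of_bool_conj)
  also have "\<dots> = (\<integral>\<^sup>+B. indicator {D. tx \<notin> D} B * ennreal ((1 - marginal \<sigma> tx) ^ n) \<partial>measure_pmf \<sigma>)"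
    by (simp add: nn_integral_cmult Suc.IH)
  also have "\<dots> = ennreal ((1 - marginal \<sigma> tx) ^ n) * ennreal (1 - marginal \<sigma> tx)"
    by (subst mult.commute, simp add: nn_integral_cmult c)
  also have "\<dots> = ennreal ((1 - marginal \<sigma> tx) ^ Suc n)"
    by (simp add: ennreal_mult'[symmetric] mult.commute marginal_def)
  finally show ?case .
qed

lemma no_collision_eq:
  assumes lam: "lam > 0"
  shows "no_collision lam \<sigma> tx = exp (- lam * marginal \<sigma> tx)"
proof -
  define q where "q = 1 - marginal \<sigma> tx"
  have q0: "q \<ge> 0" unfolding q_def marginal_def by simp
  have sm: "(\<lambda>n. (lam * q) ^ n / fact n) sums exp (lam * q)"
    using exp_converges[of "lam * q"] by (simp add: divide_inverse mult.commute)
  have sm2: "(\<lambda>n. lam ^ n / fact n * exp (- lam) * q ^ n) sums (exp (- lam) * exp (lam * q))"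
    using sums_mult[OF sm, of "exp (- lam)"] by (simp add: power_mult_distrib field_simps)
  have "emeasure (measure_pmf (other_blocks lam \<sigma>)) {Bs. \<forall>B\<in>set Bs. tx \<notin> B}
      = (\<integral>\<^sup>+n. ennreal (q ^ n) \<partial>measure_pmf (poisson_pmf lam))"
    unfolding other_blocks_def by (simp add: blocks_avoid q_def)
  also have "\<dots> = (\<integral>\<^sup>+n. ennreal (lam ^ n / fact n * exp (- lam) * q ^ n) \<partial>count_space UNIV)"
    unfolding nn_integral_measure_pmf using lam q0
    by (simp add: ennreal_mult'[symmetric] ennreal_mult[symmetric])
  also have "\<dots> = (\<Sum>n. ennreal (lam ^ n / fact n * exp (- lam) * q ^ n))"
    by (simp add: nn_integral_count_space_nat)
  also have "\<dots> = ennreal (exp (- lam) * exp (lam * q))"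
    using sm2 lam q0 by (intro suminf_ennreal_eq) auto
  finally have "emeasure (measure_pmf (other_blocks lam \<sigma>)) {Bs. \<forall>B\<in>set Bs. tx \<notin> B} = ennreal (exp (- lam * marginal \<sigma> tx))"
    by (simp add: q_def mult_exp_exp algebra_simps)
  then show ?thesis unfolding no_collision_def
    by (simp add: measure_pmf.emeasure_eq_measure)
qed

lemma budget:
  assumes fin: "finite M" and ms: "mixed_strategy M s k \<sigma>"
  shows "(\<Sum>tx\<in>M. marginal \<sigma> tx * s tx) \<le> k"
proof -
  have i: "integrable (measure_pmf \<sigma>) (\<lambda>D. indicator {D. tx \<in> D} D * s tx)" for tx
    by (rule measure_pmf.integrable_const_bound[where B="\<bar>s tx\<bar>"]) (auto simp: indicator_def)
  have "(\<Sum>tx\<in>M. marginal \<sigma> tx * s tx) = (\<Sum>tx\<in>M. measure_pmf.expectation \<sigma> (\<lambda>D. indicator {D. tx \<in> D} D * s tx))"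
    unfolding marginal_def by simp
  also have "\<dots> = measure_pmf.expectation \<sigma> (\<lambda>D. \<Sum>tx\<in>M. indicator {D. tx \<in> D} D * s tx)"
  proof -
    show ?thesis by (subst Bochner_Integration.integral_sum[OF i]) simp
  qed
  also have "\<dots> \<le> measure_pmf.expectation \<sigma> (\<lambda>D. k)"
  proof (rule integral_mono_AE)
    show "integrable (measure_pmf \<sigma>) (\<lambda>D. \<Sum>tx\<in>M. indicator {D. tx \<in> D} D * s tx)"
      by (rule Bochner_Integration.integrable_sum[OF i])
    show "AE D in measure_pmf \<sigma>. (\<Sum>tx\<in>M. indicator {D. tx \<in> D} D * s tx) \<le> k"
    proof (rule AE_pmfI)
      fix D assume "D \<in> set_pmf \<sigma>"
      with ms have D: "D \<subseteq> M" "(\<Sum>tx\<in>D. s tx) \<le> k" unfolding mixed_strategy_def by auto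
      have "(\<Sum>tx\<in>M. indicator {D. tx \<in> D} D * s tx) = (\<Sum>tx\<in>M. if tx \<in> D then s tx else 0)"
        by (rule sum.cong) (auto simp: indicator_def)
      also have "\<dots> = (\<Sum>tx\<in>D. s tx)"
        using D(1) fin by (simp add: sum.If_cases Int_absorb1)
      finally show "(\<Sum>tx\<in>M. indicator {D. tx \<in> D} D * s tx) \<le> k" using D(2) by simp
    qed
  qed simp
  also have "\<dots> = k" by simp
  finally show ?thesis .
qed

lemma ln_phat:
  assumes fin: "finite M" and lam: "lam > 0" and Spos: "(\<Sum>tx\<in>M. s tx) > 0" and tx: "tx \<in> M"
  shows "ln (v tx) = lam * p_hat_real M v s k lam tx + ((\<Sum>t\<in>M. s t * ln (v t)) - lam * k) / (\<Sum>t\<in>M. s t)"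
proof -
  define S where "S = (\<Sum>t\<in>M. s t)"
  define D where "D = (\<Sum>t\<in>M. s t * ln (v t))"
  have "(\<Sum>t\<in>M. s t * ((ln (v tx) - ln (v t)) / lam)) = (S * ln (v tx) - D) / lam"
    unfolding S_def D_def
    by (simp add: sum_divide_distrib[symmetric] right_diff_distrib sum_subtractf sum_distrib_right)
  then have "p_hat_real M v s k lam tx = (k + (S * ln (v tx) - D) / lam) / S"
    unfolding p_hat_real_def S_def by simp
  then show ?thesis using Spos lam unfolding S_def[symmetric] D_def[symmetric]
    by (simp add: field_simps)
qed

theorem theorem4p1:
  fixes M :: "'a set" and v s :: "'a \<Rightarrow> real" and k lam xhat :: real
  assumes fin: "finite M"
    and k_pos: "k > 0" and lam_pos: "lam > 0"
    and v_pos: "\<forall>tx\<in>M. v tx > 0" and s_pos: "\<forall>tx\<in>M. s tx > 0"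
    and cap: "(\<Sum>tx\<in>M. s tx) \<ge> k"
    and xhat_sol: "(\<Sum>tx\<in>M. min (max (p_hat_real M v s k lam tx - xhat) 0) 1 * s tx) = k"
    and xhat_least: "\<forall>y. (\<Sum>tx\<in>M. min (max (p_hat_real M v s k lam tx - y) 0) 1 * s tx) = k \<longrightarrow> xhat \<le> y"
  shows "(\<forall>tx\<in>M. p_real M v s k lam xhat tx \<in> {0..1})
    \<and> (\<Sum>tx\<in>M. p_real M v s k lam xhat tx * s tx) = k
    \<and> (\<forall>\<sigma>. mixed_strategy M s k \<sigma> \<and> (\<forall>tx\<in>M. marginal \<sigma> tx = p_real M v s k lam xhat tx)
           \<longrightarrow> equilibrium M v s k lam \<sigma>)"
proof -
  define ph where "ph = p_hat_real M v s k lam"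
  define p where "p = p_real M v s k lam xhat"
  have p_eq: "p tx = min (max (ph tx - xhat) 0) 1" for tx
    unfolding p_def ph_def p_real_def by auto
  have p01: "p tx \<in> {0..1}" for tx unfolding p_eq by auto
  have psum: "(\<Sum>tx\<in>M. p tx * s tx) = k" unfolding p_eq ph_def using xhat_sol .
  have Spos: "(\<Sum>t\<in>M. s t) > 0" using cap k_pos by linarith
  define a where "a = ((\<Sum>t\<in>M. s t * ln (v t)) - lam * k) / (\<Sum>t\<in>M. s t)"
  define c where "c = exp (lam * xhat + a)"
  have c0: "c > 0" unfolding c_def by simp
  have lnv: "ln (v tx) = lam * ph tx + a" if "tx \<in> M" for tx
    unfolding ph_def a_def by (rule ln_phat[OF fin lam_pos Spos that])
  have w_eq: "v tx * exp (- lam * p tx) = exp (lam * ph tx + a - lam * p tx)" if "tx \<in> M" for tx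
  proof -
    have "v tx = exp (lam * ph tx + a)" using lnv[OF that] v_pos that
      by (metis exp_ln)
    then show ?thesis by (simp add: exp_diff exp_minus field_simps)
  qed
  have key: "(q - p tx) * (v tx * exp (- lam * p tx) - c) \<le> 0"
    if tx: "tx \<in> M" and q: "q \<in> {0..1}" for tx q
  proof -
    consider "ph tx \<le> xhat" | "xhat < ph tx" "ph tx < xhat + 1" | "ph tx \<ge> xhat + 1" by linarith
    then show ?thesis
    proof cases
      case 1
      then have "p tx = 0" unfolding p_eq by simp
      moreover have "v tx * exp (- lam * p tx) \<le> c"
        unfolding w_eq[OF tx] c_def using 1 lam_pos \<open>p tx = 0\<close> by simp
      ultimately show ?thesis using q by (simp add: mult_nonneg_nonpos)
    next
      case 2
      then have "p tx = ph tx - xhat" unfolding p_eq by simp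
      have "v tx * exp (- lam * p tx) = exp (lam * ph tx + a - lam * p tx)" by (rule w_eq[OF tx])
      also have "\<dots> = c" unfolding c_def \<open>p tx = ph tx - xhat\<close> by (simp add: algebra_simps)
      finally have "v tx * exp (- lam * p tx) = c" .
      then show ?thesis by simp
    next
      case 3
      then have "p tx = 1" unfolding p_eq by simp
      moreover have "v tx * exp (- lam * p tx) \<ge> c"
      proof -
        have "lam * (xhat + 1) \<le> lam * ph tx" using 3 lam_pos by (intro mult_left_mono) auto
        then show ?thesis
          unfolding w_eq[OF tx] c_def using \<open>p tx = 1\<close> by (simp add: algebra_simps)
      qed
      ultimately show ?thesis using q by (simp add: mult_nonpos_nonneg)
    qed
  qed
  have eq: "equilibrium M v s k lam \<sigma>"
    if ms: "mixed_strategy M s k \<sigma>" and marg: "\<forall>tx\<in>M. marginal \<sigma> tx = p tx" for \<sigma>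
  proof -
    have "utility M v s lam \<sigma>' \<sigma> \<le> utility M v s lam \<sigma> \<sigma>" if ms': "mixed_strategy M s k \<sigma>'" for \<sigma>'
    proof -
      define w where "w tx = v tx * exp (- lam * p tx)" for tx
      define q where "q = marginal \<sigma>'"
      have q01: "q tx \<in> {0..1}" for tx unfolding q_def marginal_def by simp
      have qsum: "(\<Sum>tx\<in>M. q tx * s tx) \<le> k" unfolding q_def by (rule budget[OF fin ms'])
      have U: "utility M v s lam \<tau> \<sigma> = (\<Sum>tx\<in>M. marginal \<tau> tx * s tx * w tx)" for \<tau>
        unfolding utility_def w_def no_collision_eq[OF lam_pos]
        by (rule sum.cong) (use marg in auto)
      have "(\<Sum>tx\<in>M. q tx * s tx * w tx) - (\<Sum>tx\<in>M. p tx * s tx * w tx)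
          = (\<Sum>tx\<in>M. s tx * ((q tx - p tx) * (w tx - c))) + c * ((\<Sum>tx\<in>M. q tx * s tx) - (\<Sum>tx\<in>M. p tx * s tx))"
        by (simp add: sum_subtractf[symmetric] sum_distrib_left sum.distrib[symmetric] algebra_simps)
      also have "\<dots> \<le> 0"
      proof -
        have "(\<Sum>tx\<in>M. s tx * ((q tx - p tx) * (w tx - c))) \<le> 0"
        proof (rule sum_nonpos)
          fix tx assume tx: "tx \<in> M"
          have "(q tx - p tx) * (w tx - c) \<le> 0" unfolding w_def using key[OF tx q01] .
          moreover have "s tx \<ge> 0" using s_pos tx by auto
          ultimately show "s tx * ((q tx - p tx) * (w tx - c)) \<le> 0" by (simp add: mult_nonneg_nonpos)
        qed
        moreover have "c * ((\<Sum>tx\<in>M. q tx * s tx) - (\<Sum>tx\<in>M. p tx * s tx)) \<le> 0"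
          using c0 qsum psum by (simp add: mult_nonneg_nonpos)
        ultimately show ?thesis by linarith
      qed
      finally have "(\<Sum>tx\<in>M. q tx * s tx * w tx) \<le> (\<Sum>tx\<in>M. p tx * s tx * w tx)" by simp
      moreover have "(\<Sum>tx\<in>M. p tx * s tx * w tx) = (\<Sum>tx\<in>M. marginal \<sigma> tx * s tx * w tx)"
        by (rule sum.cong) (use marg in auto)
      ultimately show ?thesis unfolding U q_def by simp
    qed
    then show ?thesis unfolding equilibrium_def using ms by blast
  qed
  show ?thesis using p01 psum eq unfolding p_def by blast
qed

end
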